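(* Let $\mathcal{L}\subset\mathcal{L}_*$ be lineages with hierarchical generators $\mathcal{H},\mathcal{H}_*$, $\mathcal{R}=\mathcal{L}_*\setminus\mathcal{L}$ and $\mathcal{M}=\mathcal{R}\cap\mathcal{H}$. Then (i) for every $\psi_0\in\mathcal{R}$ there exist $k\ge0$ and $\psi_1,\dots,\psi_k$ such that $\psi_k\in\mathcal{M}$, $\psi_j\in\mathcal{R}\setminus\mathcal{M}$ and $\psi_j\in\mathrm{ch}(\psi_{j+1})$ for $j\in\{0,\dots,k-1\}$; (ii) for every $\varphi_*\in\mathcal{H}_*\setminus\mathcal{H}$ there is $\psi\in\mathcal{R}$ with $\varphi_*\in\mathrm{ch}(\psi)$; (iii) for every $\varphi_*\in\mathcal{H}_*\setminus\mathcal{H}$ there are $k\ge1$ and $\varphi\in\mathcal{M}$ with $\varphi_*\in\mathrm{ch}^k(\varphi)$.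
   Context: Fix integers $d\ge1$, $n\ge2$, $m\ge2$; $s=n-1$, $p=m-1$. B-splines $\varphi^\ell_{\vec i}(\vec x)=\prod_kQ(n^\ell x_k-i_k)$ for $\ell\ge0$, $\vec i\in\mathbb{Z}^d$, $Q$ the uniform B-spline of order $m$ with knots $0,\dots,m$; $\mathfrak{B}$ the set of all of them; $\mathcal{B}^0=\{\varphi^0_{\vec i}:\vec i\in[-p:0]^d\}$. Children $\mathrm{ch}(\varphi^\ell_{\vec i})=\{\varphi^{\ell+1}_{\vec k}:n\vec i\le\vec k\le n\vec i+sm\}$, extended to sets by union, $\mathrm{ch}^k$ the $k$-fold application. A lineage is a finite $\mathcal{L}\subset\mathfrak{B}$ with $\mathcal{L}\subset\mathcal{B}^0\cup\mathrm{ch}(\mathcal{L})$; its hierarchical generator is $(\mathcal{B}^0\cup\mathrm{ch}(\mathcal{L}))\setminus\mathcal{L}$. *)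

theory Defs
  imports Main
begin

text \<open>A tensor-product B-spline \<open>\<phi>^l_i\<close> is identified with its label \<open>(l, i)\<close>:
  level \<open>l\<close> and index vector \<open>i \<in> \<int>^d\<close> (an int list of length d).
  The map from labels to functions is injective, so this loses nothing.\<close>

type_synonym bspl = "nat \<times> int list"

definition allB :: "nat \<Rightarrow> bspl set" where
  "allB d = {(l, i). length i = d}"

definition B0 :: "nat \<Rightarrow> nat \<Rightarrow> bspl set" where
  "B0 d m = {(0, i) | i. length i = d \<and> (\<forall>c\<in>set i. - (int m - 1) \<le> c \<and> c \<le> 0)}"

definition ch :: "nat \<Rightarrow> nat \<Rightarrow> bspl \<Rightarrow> bspl set" where
  "ch n m \<phi> = {(Suc (fst \<phi>), k) | k. length k = length (snd \<phi>) \<and>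
     (\<forall>j < length k. int n * (snd \<phi> ! j) \<le> k ! j \<and>
                     k ! j \<le> int n * (snd \<phi> ! j) + (int n - 1) * int m)}"

definition chS :: "nat \<Rightarrow> nat \<Rightarrow> bspl set \<Rightarrow> bspl set" where
  "chS n m A = (\<Union>\<phi>\<in>A. ch n m \<phi>)"

definition chpow :: "nat \<Rightarrow> nat \<Rightarrow> nat \<Rightarrow> bspl set \<Rightarrow> bspl set" where
  "chpow n m k A = (chS n m ^^ k) A"

definition lineage :: "nat \<Rightarrow> nat \<Rightarrow> nat \<Rightarrow> bspl set \<Rightarrow> bool" where
  "lineage d n m L \<longleftrightarrow> finite L \<and> L \<subseteq> allB d \<and> L \<subseteq> B0 d m \<union> chS n m L"

definition hgen :: "nat \<Rightarrow> nat \<Rightarrow> nat \<Rightarrow> bspl set \<Rightarrow> bspl set" where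
  "hgen d n m L = (B0 d m \<union> chS n m L) - L"

end

theory Submission
  imports Defs
begin

lemma ch_level: "x \<in> ch n m y \<Longrightarrow> fst x = Suc (fst y)"
  by (auto simp: ch_def)

lemma chain_aux:
  assumes lin: "lineage d n m Ls" and sub: "L \<subseteq> Ls"
  shows "\<psi>0 \<in> Ls - L \<Longrightarrow> \<exists>k::nat. \<exists>\<psi>::nat \<Rightarrow> bspl. \<psi> 0 = \<psi>0 \<and> \<psi> k \<in> (Ls - L) \<inter> hgen d n m L \<and>
            (\<forall>j<k. \<psi> j \<in> (Ls - L) - ((Ls - L) \<inter> hgen d n m L) \<and> \<psi> j \<in> ch n m (\<psi> (Suc j)))"
proof (induction "fst \<psi>0" arbitrary: \<psi>0 rule: less_induct)
  case less
  show ?case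
  proof (cases "\<psi>0 \<in> hgen d n m L")
    case True
    then show ?thesis using less.prems by (intro exI[of _ 0] exI[of _ "\<lambda>_. \<psi>0"]) auto
  next
    case False
    have "\<psi>0 \<in> B0 d m \<union> chS n m Ls" using lin less.prems by (auto simp: lineage_def)
    moreover have "\<psi>0 \<notin> B0 d m \<union> chS n m L" using False less.prems by (auto simp: hgen_def)
    ultimately obtain \<psi>1 where p1: "\<psi>1 \<in> Ls" "\<psi>0 \<in> ch n m \<psi>1" by (auto simp: chS_def)
    have "\<psi>1 \<notin> L" using p1 \<open>\<psi>0 \<notin> B0 d m \<union> chS n m L\<close> by (auto simp: chS_def)
    have lt: "fst \<psi>1 < fst \<psi>0" using ch_level[OF p1(2)] by simp
    obtain k \<psi> where IH: "\<psi> 0 = \<psi>1" "\<psi> k \<in> (Ls - L) \<inter> hgen d n m L"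
       "\<forall>j<k. \<psi> j \<in> (Ls - L) - ((Ls - L) \<inter> hgen d n m L) \<and> \<psi> j \<in> ch n m (\<psi> (Suc j))"
      using less.hyps[OF lt] p1 \<open>\<psi>1 \<notin> L\<close> by blast
    define \<chi> where "\<chi> = (\<lambda>j. if j = 0 then \<psi>0 else \<psi> (j - 1))"
    have "\<chi> 0 = \<psi>0" "\<chi> (Suc k) \<in> (Ls - L) \<inter> hgen d n m L" using IH by (auto simp: \<chi>_def)
    moreover have "\<forall>j<Suc k. \<chi> j \<in> (Ls - L) - ((Ls - L) \<inter> hgen d n m L) \<and> \<chi> j \<in> ch n m (\<chi> (Suc j))"
    proof (intro allI impI)
      fix j assume "j < Suc k"
      show "\<chi> j \<in> (Ls - L) - ((Ls - L) \<inter> hgen d n m L) \<and> \<chi> j \<in> ch n m (\<chi> (Suc j))"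
      proof (cases j)
        case 0 then show ?thesis using less.prems False p1 IH(1) by (auto simp: \<chi>_def)
      next
        case (Suc i) then show ?thesis using IH(3) \<open>j < Suc k\<close> by (auto simp: \<chi>_def)
      qed
    qed
    ultimately show ?thesis by blast
  qed
qed

lemma mono_chS: "mono (chS n m)"
  by (auto simp: mono_def chS_def)

lemma chpow_chain:
  assumes "\<forall>j<k. \<psi> j \<in> ch n m (\<psi> (Suc j))"
  shows "j \<le> k \<Longrightarrow> \<psi> 0 \<in> (chS n m ^^ j) {\<psi> j}"
proof (induction j)
  case 0 then show ?case by simp
next
  case (Suc j)
  have "{\<psi> j} \<subseteq> chS n m {\<psi> (Suc j)}" using assms Suc.prems by (auto simp: chS_def)
  then have "(chS n m ^^ j) {\<psi> j} \<subseteq> (chS n m ^^ j) (chS n m {\<psi> (Suc j)})"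
    using funpow_mono[OF mono_chS] by (metis monoD)
  also have "\<dots> = (chS n m ^^ Suc j) {\<psi> (Suc j)}" by (simp add: funpow_swap1)
  finally show ?case using Suc by auto
qed

theorem lemma5p9:
  fixes d n m :: nat and L Ls :: "bspl set"
  assumes "d \<ge> 1" and "n \<ge> 2" and "m \<ge> 2"
    and "lineage d n m L" and "lineage d n m Ls" and "L \<subseteq> Ls"
  defines "R \<equiv> Ls - L"
  defines "M \<equiv> R \<inter> hgen d n m L"
  shows "(\<forall>\<psi>0\<in>R. \<exists>k::nat. \<exists>\<psi>::nat \<Rightarrow> bspl. \<psi> 0 = \<psi>0 \<and> \<psi> k \<in> M \<and>
            (\<forall>j<k. \<psi> j \<in> R - M \<and> \<psi> j \<in> ch n m (\<psi> (Suc j))))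
       \<and> (\<forall>\<phi>s\<in>hgen d n m Ls - hgen d n m L. \<exists>\<psi>\<in>R. \<phi>s \<in> ch n m \<psi>)
       \<and> (\<forall>\<phi>s\<in>hgen d n m Ls - hgen d n m L. \<exists>k\<ge>1. \<exists>\<phi>\<in>M. \<phi>s \<in> chpow n m k {\<phi>})"
proof -
  have I: "\<forall>\<psi>0\<in>R. \<exists>k::nat. \<exists>\<psi>::nat \<Rightarrow> bspl. \<psi> 0 = \<psi>0 \<and> \<psi> k \<in> M \<and>
            (\<forall>j<k. \<psi> j \<in> R - M \<and> \<psi> j \<in> ch n m (\<psi> (Suc j)))"
    using chain_aux[OF assms(5,6)] unfolding R_def M_def by blast
  have II: "\<forall>\<phi>s\<in>hgen d n m Ls - hgen d n m L. \<exists>\<psi>\<in>R. \<phi>s \<in> ch n m \<psi>"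
  proof
    fix \<phi>s assume a: "\<phi>s \<in> hgen d n m Ls - hgen d n m L"
    then have "\<phi>s \<notin> B0 d m \<union> chS n m L" "\<phi>s \<in> chS n m Ls \<union> B0 d m" "\<phi>s \<notin> Ls"
      using assms(6) by (auto simp: hgen_def)
    then obtain \<psi> where "\<psi> \<in> Ls" "\<phi>s \<in> ch n m \<psi>" by (auto simp: chS_def)
    moreover have "\<psi> \<notin> L" using calculation \<open>\<phi>s \<notin> B0 d m \<union> chS n m L\<close> by (auto simp: chS_def)
    ultimately show "\<exists>\<psi>\<in>R. \<phi>s \<in> ch n m \<psi>" unfolding R_def by blast
  qed
  have III: "\<forall>\<phi>s\<in>hgen d n m Ls - hgen d n m L. \<exists>k\<ge>1. \<exists>\<phi>\<in>M. \<phi>s \<in> chpow n m k {\<phi>}"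
  proof
    fix \<phi>s assume "\<phi>s \<in> hgen d n m Ls - hgen d n m L"
    then obtain \<psi>0 where p0: "\<psi>0 \<in> R" "\<phi>s \<in> ch n m \<psi>0" using II by blast
    then obtain k \<psi> where c: "\<psi> 0 = \<psi>0" "\<psi> k \<in> M" "\<forall>j<k. \<psi> j \<in> R - M \<and> \<psi> j \<in> ch n m (\<psi> (Suc j))"
      using I by blast
    have "\<psi> 0 \<in> (chS n m ^^ k) {\<psi> k}" using chpow_chain[of k \<psi> n m k] c(3) by auto
    then have "{\<psi>0} \<subseteq> (chS n m ^^ k) {\<psi> k}" using c(1) by auto
    then have "chS n m {\<psi>0} \<subseteq> chS n m ((chS n m ^^ k) {\<psi> k})" using mono_chS by (metis monoD)
    moreover have "\<phi>s \<in> chS n m {\<psi>0}" using p0 by (auto simp: chS_def)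
    ultimately have "\<phi>s \<in> chpow n m (Suc k) {\<psi> k}" by (auto simp: chpow_def)
    then show "\<exists>k\<ge>1. \<exists>\<phi>\<in>M. \<phi>s \<in> chpow n m k {\<phi>}" using c(2) by (intro exI[of _ "Suc k"]) auto
  qed
  show ?thesis using I II III by blast
qed

end
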